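(* A group $G$ satisfies the disjunctive identity $(x^2 = 1) \vee (y^2 = 1) \vee (xy = yx)$ (i.e. for all $x,y\in G$, at least one of $x^2=1$, $y^2=1$, $xy=yx$ holds) if and only if $G = A \rtimes B$, where $A$ is abelian and $B$ is either trivial or cyclic of order 2 acting by inversion on $A$.
   Context: A disjunctive identity (d-identity) of a group is a universally quantified formula $\forall x_1\dots x_n\,[(f_1=1)\vee\dots\vee(f_k=1)]$ with $f_i$ group words, required to be true for every substitution of group elements. The lemma is used in determining bases of d-identities of the dihedral groups $D_{2m}=\langle a,b\mid a^m=b^2=1,\ a^b=a^{-1}\rangle$. *)

theory Defs
  imports "HOL-Algebra.Algebra"
begin

definition satisfies_dident :: "('a, 'b) monoid_scheme \<Rightarrow> bool" where
  "satisfies_dident G \<longleftrightarrow>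
     (\<forall>x\<in>carrier G. \<forall>y\<in>carrier G.
        x \<otimes>\<^bsub>G\<^esub> x = \<one>\<^bsub>G\<^esub> \<or> y \<otimes>\<^bsub>G\<^esub> y = \<one>\<^bsub>G\<^esub>
        \<or> x \<otimes>\<^bsub>G\<^esub> y = y \<otimes>\<^bsub>G\<^esub> x)"

definition internal_semidirect :: "('a, 'b) monoid_scheme \<Rightarrow> 'a set \<Rightarrow> 'a set \<Rightarrow> bool" where
  "internal_semidirect G A B \<longleftrightarrow>
     A \<lhd> G \<and> subgroup B G \<and> A \<inter> B = {\<one>\<^bsub>G\<^esub>} \<and> A <#>\<^bsub>G\<^esub> B = carrier G"

end

theory Submission
  imports Defs
begin

context group
begin

lemma sq1_inv: "x \<in> carrier G \<Longrightarrow> x \<otimes> x = \<one> \<Longrightarrow> inv x = x"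
  by (metis inv_equality)

lemma comm_inv: "x \<in> carrier G \<Longrightarrow> s \<in> carrier G \<Longrightarrow> x \<otimes> s = s \<otimes> x \<Longrightarrow> inv x \<otimes> s = s \<otimes> inv x"
  by (metis inv_solve_left' inv_solve_right' m_assoc m_closed inv_closed)

lemma sub_comm:
  assumes "subgroup A G" "\<And>x y. x \<in> A \<Longrightarrow> y \<in> A \<Longrightarrow> x \<otimes> y = y \<otimes> x"
  shows "comm_group (G\<lparr>carrier := A\<rparr>)"
proof -
  interpret H: group "G\<lparr>carrier := A\<rparr>" using subgroup_imp_group[OF assms(1)] .
  show ?thesis by (rule H.group_comm_groupI) (simp add: assms(2))
qed

lemma forward:
  assumes D: "satisfies_dident G"
  shows "\<exists>A B. internal_semidirect G A B \<and> comm_group (G\<lparr>carrier := A\<rparr>) \<and>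
       (B = {\<one>} \<or>
        (\<exists>b. B = {\<one>, b} \<and> b \<noteq> \<one> \<and> b \<otimes> b = \<one> \<and>
             (\<forall>a\<in>A. b \<otimes> a \<otimes> inv b = inv a)))"
proof -
  define S where "S = {s\<in>carrier G. s \<otimes> s \<noteq> \<one>}"
  define A where "A = {x\<in>carrier G. \<forall>s\<in>S. x \<otimes> s = s \<otimes> x}"
  have Acar: "A \<subseteq> carrier G" unfolding A_def by auto
  have SA: "S \<subseteq> A"
    unfolding A_def S_def using D unfolding satisfies_dident_def by auto
  have subA: "subgroup A G"
  proof (rule subgroupI)
    show "A \<subseteq> carrier G" by (rule Acar)
    have "\<one> \<in> A" unfolding A_def S_def by auto
    then show "A \<noteq> {}" by auto
    show "inv a \<in> A" if "a \<in> A" for a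
      using that comm_inv unfolding A_def S_def by auto
    show "a \<otimes> b \<in> A" if "a \<in> A" "b \<in> A" for a b
    proof -
      have c: "a \<in> carrier G" "b \<in> carrier G" using that Acar by auto
      have ab: "a \<in> A" "b \<in> A" using that by auto
      have "a \<otimes> b \<otimes> s = s \<otimes> (a \<otimes> b)" if s: "s \<in> S" for s
      proof -
        have sc: "s \<in> carrier G" using s unfolding S_def by auto
        have "a \<otimes> b \<otimes> s = a \<otimes> (b \<otimes> s)" using c sc by (simp add: m_assoc)
        also have "\<dots> = a \<otimes> (s \<otimes> b)" using ab s unfolding A_def by auto
        also have "\<dots> = (a \<otimes> s) \<otimes> b" using c sc by (simp add: m_assoc)
        also have "\<dots> = (s \<otimes> a) \<otimes> b" using ab s unfolding A_def by auto
        also have "\<dots> = s \<otimes> (a \<otimes> b)" using c sc by (simp add: m_assoc)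
        finally show ?thesis .
      qed
      then show ?thesis using c unfolding A_def by auto
    qed
  qed
  have commA: "x \<otimes> y = y \<otimes> x" if "x \<in> A" "y \<in> A" for x y
  proof -
    have xy: "x \<in> carrier G" "y \<in> carrier G" using that Acar by auto
    show ?thesis
    proof (cases "x \<in> S \<or> y \<in> S")
      case True then show ?thesis using that unfolding A_def by auto
    next
      case False
      then have xx: "x \<otimes> x = \<one>" "y \<otimes> y = \<one>" using xy unfolding S_def by auto
      show ?thesis
      proof (cases "x \<otimes> y \<in> S")
        case True
        then have "x \<otimes> (x \<otimes> y) = (x \<otimes> y) \<otimes> x" using that(1) unfolding A_def by auto
        then have "y = x \<otimes> y \<otimes> x" using xx xy by (simp add: m_assoc[symmetric])
        then have "x \<otimes> y = x \<otimes> (x \<otimes> y \<otimes> x)" by simp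
        also have "\<dots> = y \<otimes> x" using xx xy by (simp add: m_assoc[symmetric])
        finally show ?thesis .
      next
        case False
        then have "x \<otimes> y \<otimes> (x \<otimes> y) = \<one>" using xy unfolding S_def by auto
        then have "inv (x \<otimes> y) = x \<otimes> y" using xy by (intro sq1_inv) auto
        then show ?thesis using xy xx by (simp add: inv_mult_group sq1_inv)
      qed
    qed
  qed
  have conjS: "inv x \<otimes> s \<otimes> x \<in> S" if "x \<in> carrier G" "s \<in> S" for x s
  proof -
    have s: "s \<in> carrier G" "s \<otimes> s \<noteq> \<one>" using that unfolding S_def by auto
    have "(inv x \<otimes> s \<otimes> x) \<otimes> (inv x \<otimes> s \<otimes> x) = inv x \<otimes> (s \<otimes> s) \<otimes> x"
    proof -
      have "(inv x \<otimes> s \<otimes> x) \<otimes> (inv x \<otimes> s \<otimes> x) = inv x \<otimes> s \<otimes> (x \<otimes> inv x) \<otimes> s \<otimes> x"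
        using that s by (simp only: m_assoc m_closed inv_closed)
      then show ?thesis using that s by (simp add: m_assoc)
    qed
    moreover have "inv x \<otimes> (s \<otimes> s) \<otimes> x \<noteq> \<one>"
    proof
      assume "inv x \<otimes> (s \<otimes> s) \<otimes> x = \<one>"
      then have "x \<otimes> (inv x \<otimes> (s \<otimes> s) \<otimes> x) \<otimes> inv x = \<one>" using that s by (simp add: m_assoc)
      moreover have "x \<otimes> (inv x \<otimes> (s \<otimes> s) \<otimes> x) \<otimes> inv x = (x \<otimes> inv x) \<otimes> (s \<otimes> s) \<otimes> (x \<otimes> inv x)"
        using that s by (simp only: m_assoc m_closed inv_closed)
      ultimately have "s \<otimes> s = \<one>" using that s by simp
      then show False using s by simp
    qed
    ultimately show ?thesis using that s unfolding S_def by auto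
  qed
  have normA: "A \<lhd> G"
    unfolding normal_inv_iff
  proof (intro conjI ballI subA)
    fix x h assume x: "x \<in> carrier G" and h: "h \<in> A"
    have hc: "h \<in> carrier G" using h Acar by auto
    show "x \<otimes> h \<otimes> inv x \<in> A" unfolding A_def
    proof (intro CollectI conjI ballI)
      show "x \<otimes> h \<otimes> inv x \<in> carrier G" using x hc by simp
      fix s assume s: "s \<in> S"
      have sc: "s \<in> carrier G" using s unfolding S_def by auto
      have c: "h \<otimes> (inv x \<otimes> s \<otimes> x) = (inv x \<otimes> s \<otimes> x) \<otimes> h"
        using h conjS[OF x s] unfolding A_def by auto
      have "x \<otimes> h \<otimes> inv x \<otimes> s = x \<otimes> (h \<otimes> (inv x \<otimes> s \<otimes> x)) \<otimes> inv x"
        using x hc sc by (simp add: m_assoc)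
      also have "\<dots> = x \<otimes> ((inv x \<otimes> s \<otimes> x) \<otimes> h) \<otimes> inv x" using c by simp
      also have "\<dots> = s \<otimes> (x \<otimes> h \<otimes> inv x)"
        using x hc sc by (simp add: m_assoc[symmetric])
      finally show "x \<otimes> h \<otimes> inv x \<otimes> s = s \<otimes> (x \<otimes> h \<otimes> inv x)" .
    qed
  qed
  have commG: "comm_group (G\<lparr>carrier := A\<rparr>)" by (rule sub_comm[OF subA commA])
  show ?thesis
  proof (cases "carrier G \<subseteq> A")
    case True
    have "A = carrier G" using True Acar by auto
    have "internal_semidirect G A {\<one>}"
      unfolding internal_semidirect_def
      using normA triv_subgroup subgroup.one_closed[OF subA] \<open>A = carrier G\<close>
      by (auto simp: set_mult_def)
    then show ?thesis using commG by blast
  next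
    case False
    then obtain g where g: "g \<in> carrier G" "g \<notin> A" by auto
    have outside: "h \<otimes> h = \<one> \<and> (\<forall>a\<in>A. h \<otimes> a \<otimes> inv h = inv a)"
      if h: "h \<in> carrier G" "h \<notin> A" for h
    proof -
      have hh: "h \<otimes> h = \<one>" using h SA unfolding S_def by auto
      have ih: "inv h = h" using sq1_inv[OF h(1) hh] .
      have onS: "h \<otimes> a \<otimes> inv h = inv a" if a: "a \<in> S" for a
      proof -
        have ac: "a \<in> carrier G" using a unfolding S_def by auto
        have "h \<otimes> a \<notin> A"
        proof
          assume "h \<otimes> a \<in> A"
          then have "h \<otimes> a \<otimes> inv a \<in> A" using a SA subgroup.m_closed[OF subA] subgroup.m_inv_closed[OF subA] by auto
          then show False using h ac by (simp add: m_assoc)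
        qed
        then have "h \<otimes> a \<notin> S" using SA by auto
        then have "h \<otimes> a \<otimes> (h \<otimes> a) = \<one>" using h ac unfolding S_def by auto
        then have "inv (h \<otimes> a) = h \<otimes> a" using h ac by (intro sq1_inv) auto
        then have "inv a \<otimes> h = h \<otimes> a" using h ac ih by (simp add: inv_mult_group)
        then have "inv a = h \<otimes> a \<otimes> inv h" using h ac by (metis inv_solve_right inv_closed m_closed)
        then show ?thesis by simp
      qed
      show ?thesis
      proof (intro conjI ballI hh)
        fix a assume a: "a \<in> A"
        show "h \<otimes> a \<otimes> inv h = inv a"
        proof (cases "a \<in> S")
          case True then show ?thesis using onS by blast
        next
          case False
          have ac: "a \<in> carrier G" using a Acar by auto
          have aa: "a \<otimes> a = \<one>" using False ac unfolding S_def by auto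
          have ia: "inv a = a" using sq1_inv[OF ac aa] .
          have "\<exists>s. s \<in> S" using h(2) h(1) unfolding A_def by auto
          then obtain s where s: "s \<in> S" by auto
          have sc: "s \<in> carrier G" using s unfolding S_def by auto
          have as: "a \<otimes> s = s \<otimes> a" using a s unfolding A_def by auto
          have asA: "a \<otimes> s \<in> A" using a s SA subgroup.m_closed[OF subA] by auto
          have asS: "a \<otimes> s \<in> S"
          proof (rule ccontr)
            assume "a \<otimes> s \<notin> S"
            then have "a \<otimes> s \<otimes> (a \<otimes> s) = \<one>" using ac sc unfolding S_def by auto
            also have "a \<otimes> s \<otimes> (a \<otimes> s) = a \<otimes> a \<otimes> (s \<otimes> s)"
              using ac sc as by (metis m_assoc m_closed)
            finally have "s \<otimes> s = \<one>" using aa sc by simp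
            then show False using s unfolding S_def by auto
          qed
          have e1: "h \<otimes> (a \<otimes> s) \<otimes> inv h = inv (a \<otimes> s)" using onS[OF asS] .
          have e2': "(h \<otimes> a \<otimes> inv h) \<otimes> (h \<otimes> s \<otimes> inv h) = h \<otimes> a \<otimes> (inv h \<otimes> h) \<otimes> s \<otimes> inv h"
            using h ac sc by (simp only: m_assoc m_closed inv_closed)
          have e2: "h \<otimes> (a \<otimes> s) \<otimes> inv h = (h \<otimes> a \<otimes> inv h) \<otimes> (h \<otimes> s \<otimes> inv h)"
            unfolding e2' using h ac sc by (simp add: m_assoc)
          have e3: "inv (a \<otimes> s) = inv s \<otimes> a" using ac sc ia by (simp add: inv_mult_group)
          have e4: "inv s \<otimes> a = a \<otimes> inv s" using comm_inv[OF sc ac] as by simp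
          have "(h \<otimes> a \<otimes> inv h) \<otimes> inv s = a \<otimes> inv s"
            using e1 e2 e3 e4 onS[OF s] by simp
          then have "h \<otimes> a \<otimes> inv h = a" using h ac sc by simp
          then show ?thesis using ia by simp
        qed
      qed
    qed
    have gg: "g \<otimes> g = \<one>" and gconj: "\<forall>a\<in>A. g \<otimes> a \<otimes> inv g = inv a" using outside[OF g] by auto
    have ig: "inv g = g" using sq1_inv[OF g(1) gg] .
    have g1: "g \<noteq> \<one>" using g subgroup.one_closed[OF subA] by auto
    have swap: "h \<otimes> inv s = s \<otimes> h" if h: "h \<in> carrier G" "h \<notin> A" and s: "s \<in> S" for h s
    proof -
      have sc: "s \<in> carrier G" using s unfolding S_def by auto
      have hh: "h \<otimes> h = \<one>" and "h \<otimes> s \<otimes> inv h = inv s" using outside[OF h] s SA by auto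
      moreover have "inv h = h" using sq1_inv[OF h(1) hh] .
      ultimately have "h \<otimes> s \<otimes> h = inv s" by simp
      then have "h \<otimes> (h \<otimes> s \<otimes> h) = h \<otimes> inv s" by simp
      then show ?thesis using h sc hh by (simp add: m_assoc[symmetric])
    qed
    have subB: "subgroup {\<one>, g} G"
      by (rule subgroupI) (use g gg ig in auto)
    have prod: "A <#> {\<one>, g} = carrier G"
    proof
      show "A <#> {\<one>, g} \<subseteq> carrier G"
        using Acar g by (auto simp: set_mult_def)
      show "carrier G \<subseteq> A <#> {\<one>, g}"
      proof
        fix h assume h: "h \<in> carrier G"
        show "h \<in> A <#> {\<one>, g}"
        proof (cases "h \<in> A")
          case True
          then have "h = h \<otimes> \<one>" using h by simp
          then show ?thesis using True unfolding set_mult_def by blast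
        next
          case False
          have "h \<otimes> g \<in> A" unfolding A_def
          proof (intro CollectI conjI ballI)
            show "h \<otimes> g \<in> carrier G" using h g by simp
            fix s assume s: "s \<in> S"
            have sc: "s \<in> carrier G" using s unfolding S_def by auto
            have gs: "g \<otimes> s = inv s \<otimes> g"
            proof -
              have "g \<otimes> s \<otimes> g = inv s" using gconj s SA ig by auto
              then have "g \<otimes> s \<otimes> g \<otimes> g = inv s \<otimes> g" by simp
              then show ?thesis using g sc gg by (simp add: m_assoc)
            qed
            have "h \<otimes> g \<otimes> s = h \<otimes> inv s \<otimes> g" using gs h g sc by (simp add: m_assoc)
            also have "\<dots> = s \<otimes> (h \<otimes> g)" using swap[OF h False s] h g sc by (simp add: m_assoc)
            finally show "h \<otimes> g \<otimes> s = s \<otimes> (h \<otimes> g)" .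
          qed
          moreover have "h = (h \<otimes> g) \<otimes> g" using h g gg by (simp add: m_assoc)
          ultimately show ?thesis unfolding set_mult_def by blast
        qed
      qed
    qed
    have "internal_semidirect G A {\<one>, g}"
      unfolding internal_semidirect_def
      using normA subB prod g subgroup.one_closed[OF subA] by auto
    then show ?thesis using commG g1 gg gconj by blast
  qed
qed

lemma backward:
  assumes "internal_semidirect G A B" "comm_group (G\<lparr>carrier := A\<rparr>)"
    "B = {\<one>} \<or>
        (\<exists>b. B = {\<one>, b} \<and> b \<noteq> \<one> \<and> b \<otimes> b = \<one> \<and>
             (\<forall>a\<in>A. b \<otimes> a \<otimes> inv b = inv a))"
  shows "satisfies_dident G"
proof -
  have nA: "A \<lhd> G" and prod: "A <#> B = carrier G" using assms(1) unfolding internal_semidirect_def by auto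
  have subA: "subgroup A G" using nA normal_imp_subgroup by blast
  have Acar: "A \<subseteq> carrier G" using subgroup.subset[OF subA] .
  have commA: "x \<otimes> y = y \<otimes> x" if "x \<in> A" "y \<in> A" for x y
    using comm_monoid.m_comm[OF comm_group.axioms(1)[OF assms(2)]] that by simp
  show ?thesis
    using assms(3)
  proof
    assume "B = {\<one>}"
    moreover have "A <#> {\<one>} = A" using Acar by (force simp: set_mult_def)
    ultimately have "carrier G \<subseteq> A" using prod by auto
    then show ?thesis unfolding satisfies_dident_def using commA by blast
  next
    assume "\<exists>b. B = {\<one>, b} \<and> b \<noteq> \<one> \<and> b \<otimes> b = \<one> \<and> (\<forall>a\<in>A. b \<otimes> a \<otimes> inv b = inv a)"
    then obtain b where B: "B = {\<one>, b}" and bb: "b \<otimes> b = \<one>" and bc: "\<forall>a\<in>A. b \<otimes> a \<otimes> inv b = inv a" by auto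
    have bcar: "b \<in> carrier G" using prod B Acar unfolding set_mult_def
      by (metis assms(1) insert_subset internal_semidirect_def subgroup.subset)
    have ib: "inv b = b" using sq1_inv[OF bcar bb] .
    have cases: "x \<in> A \<or> x \<otimes> x = \<one>" if x: "x \<in> carrier G" for x
    proof -
      have "x \<in> A <#> B" using x prod by simp
      then obtain a c where a: "a \<in> A" "c \<in> B" "x = a \<otimes> c" unfolding set_mult_def by auto
      show ?thesis
      proof (cases "c = \<one>")
        case True then show ?thesis using a Acar by auto
      next
        case False
        then have cb: "c = b" using a B by auto
        have ac: "a \<in> carrier G" using a Acar by auto
        have "b \<otimes> a \<otimes> b = inv a" using bc a ib by auto
        then have "a \<otimes> (b \<otimes> a \<otimes> b) = \<one>" using ac by simp
        then have "x \<otimes> x = \<one>" using a cb ac bcar by (simp add: m_assoc)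
        then show ?thesis by simp
      qed
    qed
    show ?thesis unfolding satisfies_dident_def using cases commA by blast
  qed
qed

end

theorem lemma5:
  fixes G (structure)
  assumes "group G"
  shows "satisfies_dident G \<longleftrightarrow>
    (\<exists>A B. internal_semidirect G A B \<and> comm_group (G\<lparr>carrier := A\<rparr>) \<and>
       (B = {\<one>} \<or>
        (\<exists>b. B = {\<one>, b} \<and> b \<noteq> \<one> \<and> b \<otimes> b = \<one> \<and>
             (\<forall>a\<in>A. b \<otimes> a \<otimes> inv b = inv a))))"
  using group.forward[OF assms] group.backward[OF assms] by blast

end
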